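(* Consider the deterministic split-node max-neighbour algorithm described in the context, on a dynamic graph $(G_r)_{r\ge1}$ with node set $V$. For every round $r\ge1$, \[ \phi(V,w_r)\le\phi(V,w_{r-1})-t_{r-1}/60, \] where $t_r:=\max_{u,v\in V}|w_r(u)-w_r(v)|$.
   Context: Setting: a fixed set $V$ of $n$ nodes, a sequence of connected graphs $G_r=(V,E_r)$ ($r\ge1$), $N_r(v)$ the neighbours of $v$ in $G_r$, non-negative real loads $w_0(v)$, and $w_r(v)$ the load of $v$ at the end of round $r$. For $w:V\to\mathbb{R}_{\ge0}$, $\phi(V,w)=\sum_{\{u,v\}\subseteq V}|w(u)-w(v)|$ (sum over unordered pairs of distinct nodes). Algorithm: each node $v$ is split into two virtual nodes $v_s$ (sender) and $v_a$ (receiver). In round $r$: set $w_r^1(v_s)=w_r^1(v_a)=w_{r-1}(v)/2$. Each $v_s$ sends a proposal to $u_a$ where $u\in N_r(v)$ maximizes $|w_{r-1}(u)-w_{r-1}(v)|$ (ties broken by a fixed deterministic rule). Each $v_a$ that received proposals accepts exactly one, from $u_s$ with $u$ maximizing $|w_{r-1}(u)-w_{r-1}(v)|$ among proposers (deterministic tie-breaking). For each accepted pair $(u_s,v_a)$, set both virtual loads to $(w_r^1(u_s)+w_r^1(v_a))/2$; other virtual nodes keep their value; then $w_r(v)$ is the sum of the two virtual loads of $v$. *)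

theory Defs
  imports Complex_Main
begin

definition connected_graph :: "'a set \<Rightarrow> ('a \<Rightarrow> 'a \<Rightarrow> bool) \<Rightarrow> bool" where
  "connected_graph V E \<longleftrightarrow>
     (\<forall>u v. E u v \<longrightarrow> u \<in> V \<and> v \<in> V \<and> u \<noteq> v \<and> E v u) \<and>
     (\<forall>u\<in>V. \<forall>v\<in>V. (u, v) \<in> {(x, y). E x y}\<^sup>*)"

definition nbrs :: "'a set \<Rightarrow> ('a \<Rightarrow> 'a \<Rightarrow> bool) \<Rightarrow> 'a \<Rightarrow> 'a set" where
  "nbrs V E v = {u \<in> V. E v u}"

definition phi :: "'a set \<Rightarrow> ('a \<Rightarrow> real) \<Rightarrow> real" where
  "phi V w = (\<Sum>(u, v) \<in> {(u, v). u \<in> V \<and> v \<in> V \<and> u \<noteq> v}. \<bar>w u - w v\<bar>) / 2"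

definition spread :: "'a set \<Rightarrow> ('a \<Rightarrow> real) \<Rightarrow> real" where
  "spread V w = Max {\<bar>w u - w v\<bar> | u v. u \<in> V \<and> v \<in> V}"

text \<open>Proposal of sender v_s (None = no neighbour, no proposal): a neighbour
  maximizing the load difference. Any (deterministic) tie-breaking is allowed.\<close>
definition valid_proposals :: "'a set \<Rightarrow> ('a \<Rightarrow> 'a \<Rightarrow> bool) \<Rightarrow> ('a \<Rightarrow> real) \<Rightarrow> ('a \<Rightarrow> 'a option) \<Rightarrow> bool" where
  "valid_proposals V E w prp \<longleftrightarrow>
     (\<forall>v\<in>V. (prp v = None \<longleftrightarrow> nbrs V E v = {}) \<and>
        (\<forall>u. prp v = Some u \<longrightarrow> u \<in> nbrs V E v \<and>
           (\<forall>x \<in> nbrs V E v. \<bar>w x - w v\<bar> \<le> \<bar>w u - w v\<bar>)))"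

definition proposers :: "'a set \<Rightarrow> ('a \<Rightarrow> 'a option) \<Rightarrow> 'a \<Rightarrow> 'a set" where
  "proposers V prp v = {u \<in> V. prp u = Some v}"

text \<open>Receiver v_a accepts exactly one proposal (if any), from a proposer maximizing
  the load difference (any tie-breaking allowed).\<close>
definition valid_acceptance :: "'a set \<Rightarrow> ('a \<Rightarrow> real) \<Rightarrow> ('a \<Rightarrow> 'a option) \<Rightarrow> ('a \<Rightarrow> 'a option) \<Rightarrow> bool" where
  "valid_acceptance V w prp acc \<longleftrightarrow>
     (\<forall>v\<in>V. (acc v = None \<longleftrightarrow> proposers V prp v = {}) \<and>
        (\<forall>u. acc v = Some u \<longrightarrow> u \<in> proposers V prp v \<and>
           (\<forall>x \<in> proposers V prp v. \<bar>w x - w v\<bar> \<le> \<bar>w u - w v\<bar>)))"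

definition sender_load :: "('a \<Rightarrow> real) \<Rightarrow> ('a \<Rightarrow> 'a option) \<Rightarrow> ('a \<Rightarrow> 'a option) \<Rightarrow> 'a \<Rightarrow> real" where
  "sender_load w prp acc v =
     (case prp v of
        None \<Rightarrow> w v / 2
      | Some u \<Rightarrow> (if acc u = Some v then (w v / 2 + w u / 2) / 2 else w v / 2))"

definition receiver_load :: "('a \<Rightarrow> real) \<Rightarrow> ('a \<Rightarrow> 'a option) \<Rightarrow> 'a \<Rightarrow> real" where
  "receiver_load w acc v =
     (case acc v of
        None \<Rightarrow> w v / 2
      | Some u \<Rightarrow> (w u / 2 + w v / 2) / 2)"

definition round_result :: "('a \<Rightarrow> real) \<Rightarrow> ('a \<Rightarrow> 'a option) \<Rightarrow> ('a \<Rightarrow> 'a option) \<Rightarrow> 'a \<Rightarrow> real" where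
  "round_result w prp acc v = sender_load w prp acc v + receiver_load w acc v"

end

theory Submission
  imports Defs "HOL-Analysis.Analysis"
begin


lemma abs4: fixes a b c d :: real shows "\<bar>a+b-c-d\<bar> \<le> (\<bar>a-c\<bar>+\<bar>b-d\<bar>+\<bar>a-d\<bar>+\<bar>b-c\<bar>)/2"
  by (simp add: abs_if) 

lemma cover_len:
  fixes c r :: "'b \<Rightarrow> real"
  assumes fin: "finite V" and nn: "\<forall>u\<in>V. r u \<ge> 0" and lh: "lo \<le> hi"
    and cov: "{lo..<hi} \<subseteq> (\<Union>u\<in>V. {c u - r u .. c u + r u})"
  shows "hi - lo \<le> (\<Sum>u\<in>V. 2 * r u)"
proof -
  have "ennreal (hi - lo) = emeasure lborel {lo..<hi}" using lh by simp
  also have "\<dots> \<le> emeasure lborel (\<Union>u\<in>V. {c u - r u .. c u + r u})"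
    by (rule emeasure_mono[OF cov]) (use fin in auto)
  also have "\<dots> \<le> (\<Sum>u\<in>V. emeasure lborel {c u - r u .. c u + r u})"
    by (rule emeasure_subadditive_finite[OF fin]) auto
  also have "\<dots> = (\<Sum>u\<in>V. ennreal (2 * r u))"
    by (rule sum.cong) (use nn in auto)
  also have "\<dots> = ennreal (\<Sum>u\<in>V. 2 * r u)" using nn by simp
  finally show ?thesis using nn
    by (subst (asm) ennreal_le_iff) (auto intro: sum_nonneg)
qed

lemma rtrancl_cross:
  assumes "(p, q) \<in> R\<^sup>*" "p \<in> H" "q \<notin> H"
  shows "\<exists>a b. (a, b) \<in> R \<and> a \<in> H \<and> b \<notin> H"
  using assms
proof (induction rule: rtrancl_induct)
  case base then show ?case by simp
next
  case (step y z)
  then show ?case by blast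
qed

lemma avg_lemma:
  fixes y :: "'b \<Rightarrow> real" and \<tau> :: "'b \<Rightarrow> 'b"
  assumes fin: "finite W" and inW: "\<forall>k\<in>W. \<tau> k \<in> W" and inv: "\<forall>k\<in>W. \<tau> (\<tau> k) = k"
  shows "(\<Sum>k\<in>W. \<Sum>l\<in>W. \<bar>(y k + y (\<tau> k))/2 - (y l + y (\<tau> l))/2\<bar>)
     \<le> (\<Sum>k\<in>W. \<Sum>l\<in>W. \<bar>y k - y l\<bar>) - (\<Sum>k\<in>W. \<bar>y k - y (\<tau> k)\<bar>)"
proof -
  have bij: "bij_betw \<tau> W W" by (rule bij_betwI[where g=\<tau>]) (auto simp: inW inv)
  have pt: "\<bar>(y k + y (\<tau> k))/2 - (y l + y (\<tau> l))/2\<bar> \<le>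
      (\<bar>y k - y l\<bar> + \<bar>y (\<tau> k) - y (\<tau> l)\<bar>)/2 - (if l = \<tau> k then \<bar>y k - y (\<tau> k)\<bar> else 0)"
    if "k \<in> W" "l \<in> W" for k l
  proof (cases "l = \<tau> k")
    case True
    then have "\<tau> l = k" using inv that by auto
    then show ?thesis using True by (simp add: abs_minus_commute)
  next
    case False
    have "\<bar>(y k + y (\<tau> k))/2 - (y l + y (\<tau> l))/2\<bar> = \<bar>(y k - y l) + (y (\<tau> k) - y (\<tau> l))\<bar>/2"
    proof -
      have "(y k + y (\<tau> k))/2 - (y l + y (\<tau> l))/2 = ((y k - y l) + (y (\<tau> k) - y (\<tau> l)))/2"
        by (simp add: field_simps)
      then show ?thesis by (simp only: abs_divide)
    qed
    also have "\<dots> \<le> (\<bar>y k - y l\<bar> + \<bar>y (\<tau> k) - y (\<tau> l)\<bar>)/2"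
      by (intro divide_right_mono abs_triangle_ineq) simp
    finally show ?thesis using False by simp
  qed
  have s1: "(\<Sum>k\<in>W. \<Sum>l\<in>W. \<bar>y (\<tau> k) - y (\<tau> l)\<bar>) = (\<Sum>k\<in>W. \<Sum>l\<in>W. \<bar>y k - y l\<bar>)"
  proof -
    have "(\<Sum>k\<in>W. \<Sum>l\<in>W. \<bar>y (\<tau> k) - y (\<tau> l)\<bar>) = (\<Sum>k\<in>W. \<Sum>l\<in>W. \<bar>y (\<tau> k) - y l\<bar>)"
      by (rule sum.cong[OF refl], rule sum.reindex_bij_betw[OF bij, where g="\<lambda>l. \<bar>y (\<tau> _) - y l\<bar>"])
    also have "\<dots> = (\<Sum>k\<in>W. \<Sum>l\<in>W. \<bar>y k - y l\<bar>)"
      by (rule sum.reindex_bij_betw[OF bij, where g="\<lambda>k. \<Sum>l\<in>W. \<bar>y k - y l\<bar>"])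
    finally show ?thesis .
  qed
  have s2: "(\<Sum>k\<in>W. \<Sum>l\<in>W. (if l = \<tau> k then \<bar>y k - y (\<tau> k)\<bar> else 0)) = (\<Sum>k\<in>W. \<bar>y k - y (\<tau> k)\<bar>)"
    using fin inW by (auto intro!: sum.cong)
  have "(\<Sum>k\<in>W. \<Sum>l\<in>W. \<bar>(y k + y (\<tau> k))/2 - (y l + y (\<tau> l))/2\<bar>) \<le>
     (\<Sum>k\<in>W. \<Sum>l\<in>W. (\<bar>y k - y l\<bar> + \<bar>y (\<tau> k) - y (\<tau> l)\<bar>)/2 - (if l = \<tau> k then \<bar>y k - y (\<tau> k)\<bar> else 0))"
    by (intro sum_mono pt)
  also have "\<dots> = ((\<Sum>k\<in>W. \<Sum>l\<in>W. \<bar>y k - y l\<bar>) + (\<Sum>k\<in>W. \<Sum>l\<in>W. \<bar>y (\<tau> k) - y (\<tau> l)\<bar>))/2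
       - (\<Sum>k\<in>W. \<Sum>l\<in>W. (if l = \<tau> k then \<bar>y k - y (\<tau> k)\<bar> else 0))"
    by (simp add: sum_subtractf sum.distrib flip: sum_divide_distrib)
  finally show ?thesis using s1 s2 by simp
qed

lemma half_abs: fixes a b :: real shows "\<bar>a/2 - b/2\<bar> = \<bar>a - b\<bar>/2"
proof -
  have "a/2 - b/2 = (a - b)/2" by (simp add: field_simps)
  then show ?thesis by (simp only: abs_divide)
qed

lemma phi_eq: "finite V \<Longrightarrow> phi V z = (\<Sum>u\<in>V. \<Sum>v\<in>V. \<bar>z u - z v\<bar>)/2"
proof -
  assume fin: "finite V"
  have "(\<Sum>(u, v) \<in> {(u, v). u \<in> V \<and> v \<in> V \<and> u \<noteq> v}. \<bar>z u - z v\<bar>)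
      = (\<Sum>(u, v) \<in> V \<times> V. \<bar>z u - z v\<bar>)"
    by (rule sum.mono_neutral_left) (use fin in auto)
  also have "\<dots> = (\<Sum>u\<in>V. \<Sum>v\<in>V. \<bar>z u - z v\<bar>)" by (simp add: sum.cartesian_product)
  finally show ?thesis by (simp add: phi_def)
qed

lemma round_lemma:
  fixes V :: "'a set" and E and x x' :: "'a \<Rightarrow> real" and p a :: "'a \<Rightarrow> 'a option"
  assumes fin: "finite V" and ne: "V \<noteq> {}" and conn: "connected_graph V E"
    and vp: "valid_proposals V E x p" and va: "valid_acceptance V x p a"
    and upd: "\<forall>v\<in>V. x' v = round_result x p a v"
  shows "phi V x' \<le> phi V x - spread V x / 60"
proof -
  define W where "W = V \<times> (UNIV::bool set)"
  define \<tau> where "\<tau> = (\<lambda>(v::'a, b::bool). if b then (case p v of None \<Rightarrow> (v,True)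
      | Some u \<Rightarrow> if a u = Some v then (u,False) else (v,True))
     else (case a v of None \<Rightarrow> (v,False) | Some u \<Rightarrow> (u,True)))"
  define y where "y = (\<lambda>k::'a\<times>bool. x (fst k)/2)"
  define y' where "y' = (\<lambda>k. (y k + y (\<tau> k))/2)"
  have finW: "finite W" using fin by (simp add: W_def)
  have pV: "u \<in> V \<and> E v u \<and> (\<forall>z\<in>nbrs V E v. \<bar>x z - x v\<bar> \<le> \<bar>x u - x v\<bar>)"
    if "v\<in>V" "p v = Some u" for v u
    using vp that unfolding valid_proposals_def nbrs_def by auto
  have aV: "u \<in> V \<and> p u = Some v \<and> (\<forall>z\<in>proposers V p v. \<bar>x z - x v\<bar> \<le> \<bar>x u - x v\<bar>)"
    if "v\<in>V" "a v = Some u" for v u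
    using va that unfolding valid_acceptance_def proposers_def by auto
  have aSome: "a u \<noteq> None" if "v\<in>V" "p v = Some u" for v u
  proof -
    have "u \<in> V" using pV that by blast
    moreover have "v \<in> proposers V p u" using that by (simp add: proposers_def)
    ultimately show ?thesis using va unfolding valid_acceptance_def by blast
  qed
  have pSome: "p v \<noteq> None" if "v\<in>V" "E v u" "u \<in> V" for v u
  proof -
    have "u \<in> nbrs V E v" using that by (simp add: nbrs_def)
    then show ?thesis using vp that unfolding valid_proposals_def by blast
  qed
  have inW: "\<forall>k\<in>W. \<tau> k \<in> W"
  proof
    fix k assume "k \<in> W"
    then obtain v b where k: "k = (v,b)" "v \<in> V" by (auto simp: W_def)
    have "fst (\<tau> k) \<in> V"
    proof (cases b)
      case True
      then show ?thesis using k pV[OF k(2)] by (auto simp: \<tau>_def split: option.split)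
    next
      case False
      then show ?thesis using k aV[OF k(2)] by (auto simp: \<tau>_def split: option.split)
    qed
    then show "\<tau> k \<in> W" by (cases "\<tau> k") (simp add: W_def)
  qed
  have inv: "\<forall>k\<in>W. \<tau> (\<tau> k) = k"
  proof
    fix k assume "k \<in> W"
    then obtain v b where k: "k = (v,b)" "v \<in> V" by (auto simp: W_def)
    show "\<tau> (\<tau> k) = k"
    proof (cases b)
      case True
      then show ?thesis using k by (auto simp: \<tau>_def split: option.split)
    next
      case False
      then show ?thesis using k aV by (auto simp: \<tau>_def split: option.split)
    qed
  qed
  have xdec: "x' v = y' (v,True) + y' (v,False)" if "v \<in> V" for v
    using upd that
    by (auto simp: round_result_def sender_load_def receiver_load_def y'_def \<tau>_def y_def
        split: option.split)
  define P where "P z = (\<Sum>u\<in>V. \<Sum>v\<in>V. \<bar>z u - z v\<bar>)" for z :: "'a \<Rightarrow> real"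
  define \<Psi> where "\<Psi> z = (\<Sum>k\<in>W. \<Sum>l\<in>W. \<bar>z k - z l\<bar>)" for z :: "'a\<times>bool \<Rightarrow> real"
  have sumW: "(\<Sum>k\<in>W. f k) = (\<Sum>v\<in>V. f (v,True) + f (v,False))" for f :: "'a\<times>bool \<Rightarrow> real"
  proof -
    have "(\<Sum>k\<in>W. f k) = (\<Sum>v\<in>V. \<Sum>b\<in>UNIV. f (v,b))"
      unfolding W_def by (simp add: sum.cartesian_product)
    then show ?thesis by (simp add: UNIV_bool add.commute)
  qed
  have Psi_y: "\<Psi> y = 2 * P x"
  proof -
    have h: "\<bar>x v/2 - x u/2\<bar> = \<bar>x v - x u\<bar>/2" for u v
    proof -
      have "x v/2 - x u/2 = (x v - x u)/2" by (simp add: field_simps)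
      then show ?thesis by (simp only: abs_divide)
    qed
    show ?thesis unfolding \<Psi>_def P_def sumW
      by (simp add: y_def h sum.distrib sum_distrib_left flip: sum_divide_distrib)
  qed
  have P_x': "P x' \<le> \<Psi> y' / 2"
  proof -
    have "P x' = (\<Sum>u\<in>V. \<Sum>v\<in>V. \<bar>y' (u,True) + y' (u,False) - y' (v,True) - y' (v,False)\<bar>)"
      unfolding P_def by (intro sum.cong refl) (simp add: xdec)
    also have "\<dots> \<le> (\<Sum>u\<in>V. \<Sum>v\<in>V. (\<bar>y' (u,True) - y' (v,True)\<bar> + \<bar>y' (u,False) - y' (v,False)\<bar>
          + \<bar>y' (u,True) - y' (v,False)\<bar> + \<bar>y' (u,False) - y' (v,True)\<bar>)/2)"
      by (intro sum_mono abs4)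
    also have "\<dots> = \<Psi> y' / 2"
      unfolding \<Psi>_def sumW
      by (simp add: sum.distrib flip: sum_divide_distrib)
    finally show ?thesis .
  qed
  have avg: "\<Psi> y' \<le> \<Psi> y - (\<Sum>k\<in>W. \<bar>y k - y (\<tau> k)\<bar>)"
    unfolding \<Psi>_def y'_def by (rule avg_lemma[OF finW inW inv])
  define g where "g u = 2 * \<bar>y (u,False) - y (\<tau> (u,False))\<bar>" for u
  have g_nn: "\<forall>u\<in>V. g u \<ge> 0" by (simp add: g_def)
  have Dg: "(\<Sum>k\<in>W. \<bar>y k - y (\<tau> k)\<bar>) \<ge> (\<Sum>u\<in>V. g u)/2"
  proof -
    have "(\<Sum>u\<in>V. g u)/2 = (\<Sum>u\<in>V. \<bar>y (u,False) - y (\<tau> (u,False))\<bar>)"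
      by (simp add: g_def sum_divide_distrib)
    also have "\<dots> \<le> (\<Sum>u\<in>V. \<bar>y (u,True) - y (\<tau> (u,True))\<bar> + \<bar>y (u,False) - y (\<tau> (u,False))\<bar>)"
      by (intro sum_mono) simp
    finally show ?thesis by (simp add: sumW)
  qed
  have gprop: "\<bar>x u - x v\<bar> \<le> g u" if vv: "v\<in>V" "p v = Some u" for v u
  proof -
    obtain z where z: "a u = Some z" using aSome[OF vv] by blast
    have uV: "u \<in> V" using pV vv by blast
    have "v \<in> proposers V p u" using vv by (simp add: proposers_def)
    then have "\<bar>x v - x u\<bar> \<le> \<bar>x z - x u\<bar>" using aV[OF uV z] by blast
    moreover have "g u = \<bar>x u - x z\<bar>" using z by (simp add: g_def \<tau>_def y_def half_abs)
    ultimately show ?thesis by (simp add: abs_minus_commute)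
  qed
  obtain p0 q0 where pq: "p0 \<in> V" "q0 \<in> V" "spread V x = x p0 - x q0" "x q0 \<le> x p0"
  proof -
    let ?S = "{\<bar>x u - x v\<bar> | u v. u \<in> V \<and> v \<in> V}"
    have "?S = (\<lambda>(u,v). \<bar>x u - x v\<bar>) ` (V \<times> V)" by auto
    then have "finite ?S" using fin by simp
    moreover have "?S \<noteq> {}" using ne by auto
    ultimately have "Max ?S \<in> ?S" by (rule Max_in)
    then obtain u v where uv: "u \<in> V" "v \<in> V" "spread V x = \<bar>x u - x v\<bar>"
      unfolding spread_def by blast
    show ?thesis
    proof (cases "x v \<le> x u")
      case True then show ?thesis using that uv by auto
    next
      case False then show ?thesis using that[of v u] uv by auto
    qed
  qed
  have cov: "{x q0..<x p0} \<subseteq> (\<Union>u\<in>V. {x u - 2*g u .. x u + 2*g u})"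
  proof
    fix s assume s: "s \<in> {x q0..<x p0}"
    let ?H = "{v. x v > s}"
    have "(p0, q0) \<in> {(u, v). E u v}\<^sup>*" using conn pq unfolding connected_graph_def by blast
    moreover have "p0 \<in> ?H" "q0 \<notin> ?H" using s by auto
    ultimately have "\<exists>a0 b0. (a0, b0) \<in> {(u, v). E u v} \<and> a0 \<in> ?H \<and> b0 \<notin> ?H"
      by (rule rtrancl_cross)
    then obtain a0 b0 where ab0: "(a0, b0) \<in> {(u, v). E u v}" "a0 \<in> ?H" "b0 \<notin> ?H"
      by blast
    then have ab: "E a0 b0" "x a0 > s" "x b0 \<le> s" by auto
    have Esym: "\<forall>u v. E u v \<longrightarrow> u \<in> V \<and> v \<in> V \<and> u \<noteq> v \<and> E v u"
      using conn unfolding connected_graph_def by (rule conjunct1)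
    have abV: "a0 \<in> V" "b0 \<in> V" using Esym ab(1) by simp_all
    obtain u where u: "p a0 = Some u" using pSome[OF abV(1) ab(1) abV(2)] by blast
    have "b0 \<in> nbrs V E a0" using abV ab by (simp add: nbrs_def)
    then have "\<bar>x b0 - x a0\<bar> \<le> \<bar>x u - x a0\<bar>" "u \<in> V" using pV[OF abV(1) u] by blast+
    moreover have "\<bar>x u - x a0\<bar> \<le> g u" using gprop[OF abV(1) u] .
    ultimately have "\<bar>s - x u\<bar> \<le> 2 * g u" "u \<in> V" using ab s by (simp_all add: abs_le_iff) linarith
    then show "s \<in> (\<Union>u\<in>V. {x u - 2*g u .. x u + 2*g u})"
      by (intro UN_I[of u]) (auto simp: abs_le_iff)
  qed
  have t: "x p0 - x q0 \<le> (\<Sum>u\<in>V. 2 * (2 * g u))"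
    by (rule cover_len[OF fin _ pq(4) cov]) (use g_nn in auto)
  have "phi V x' = P x' / 2" using phi_eq[OF fin] by (simp add: P_def)
  moreover have "phi V x = P x / 2" using phi_eq[OF fin] by (simp add: P_def)
  moreover have "(\<Sum>u\<in>V. 2 * (2 * g u)) = 4 * (\<Sum>u\<in>V. g u)" by (simp add: sum_distrib_left)
  ultimately show ?thesis using P_x' avg Psi_y Dg t pq(3,4) by linarith
qed



theorem corollary1:
  fixes V :: "'a set"
    and E :: "nat \<Rightarrow> 'a \<Rightarrow> 'a \<Rightarrow> bool"
    and w :: "nat \<Rightarrow> 'a \<Rightarrow> real"
    and prp acc :: "nat \<Rightarrow> 'a \<Rightarrow> 'a option"
  assumes "finite V" and "V \<noteq> {}"
    and "\<forall>v\<in>V. w 0 v \<ge> 0"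
    and "\<forall>r\<ge>1. connected_graph V (E r)"
    and "\<forall>r\<ge>1. valid_proposals V (E r) (w (r - 1)) (prp r)"
    and "\<forall>r\<ge>1. valid_acceptance V (w (r - 1)) (prp r) (acc r)"
    and "\<forall>r\<ge>1. \<forall>v\<in>V. w r v = round_result (w (r - 1)) (prp r) (acc r) v"
  shows "\<forall>r\<ge>1. phi V (w r) \<le> phi V (w (r - 1)) - spread V (w (r - 1)) / 60"
proof (intro allI impI)
  fix r :: nat assume r: "r \<ge> 1"
  show "phi V (w r) \<le> phi V (w (r - 1)) - spread V (w (r - 1)) / 60"
    using round_lemma[OF assms(1,2)] assms(4-7) r by blast
qed

end
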